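(* For every fixed positive integer $q$ there is a constant $C_q$ such that for every $k\ge q$ there exists a set of uniqueness for $(\mathcal{B}^k_q)_+$ with at most $C_q\,k^{\lfloor q/2\rfloor}$ elements; that is, there exist sets of uniqueness for $(\mathcal{B}^k_q)_+$ of size $O(k^{\lfloor q/2\rfloor})$.
   Context: Let $\mathcal{X}=\{-1,+1\}^k$. For $L\subseteq\{1,\ldots,k\}$ let $w_L(x)=\prod_{j\in L}x_j$ (with $w_\emptyset\equiv 1$). For $1\le q\le k$, $\mathcal{B}^k_q$ is the linear span of $\{w_L: |L|\le q\}$ in the space of real functions on $\mathcal{X}$, and $(\mathcal{B}^k_q)_+=\{\varphi\in\mathcal{B}^k_q:\ \varphi\ge 0\}$. A set $U\subseteq\mathcal{X}$ is a set of uniqueness for $(\mathcal{B}^k_q)_+$ if the only $\varphi\in(\mathcal{B}^k_q)_+$ vanishing on $U$ is $\varphi\equiv0$. *)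

theory Defs
  imports "HOL-Analysis.Analysis"
begin

text \<open>The cube X = {-1,+1}^k, points represented as functions nat => real,
  with coordinates indexed by {1..k} and all other coordinates equal to 0.\<close>
definition cube :: "nat \<Rightarrow> (nat \<Rightarrow> real) set" where
  "cube k = {x. (\<forall>j\<in>{1..k}. x j = -1 \<or> x j = 1) \<and> (\<forall>j. j \<notin> {1..k} \<longrightarrow> x j = 0)}"

definition walsh :: "nat set \<Rightarrow> (nat \<Rightarrow> real) \<Rightarrow> real" where
  "walsh L x = (\<Prod>j\<in>L. x j)"

text \<open>B^k_q: real functions on the cube lying in the linear span of the w_L with
  L a subset of {1..k}, |L| <= q. Functions are compared on the cube only.\<close>
definition Bkq :: "nat \<Rightarrow> nat \<Rightarrow> ((nat \<Rightarrow> real) \<Rightarrow> real) set" where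
  "Bkq k q = {\<phi>. \<exists>c :: nat set \<Rightarrow> real. \<forall>x\<in>cube k.
      \<phi> x = (\<Sum>L\<in>{L. L \<subseteq> {1..k} \<and> card L \<le> q}. c L * walsh L x)}"

definition Bkq_plus :: "nat \<Rightarrow> nat \<Rightarrow> ((nat \<Rightarrow> real) \<Rightarrow> real) set" where
  "Bkq_plus k q = {\<phi>\<in>Bkq k q. \<forall>x\<in>cube k. \<phi> x \<ge> 0}"

definition uniqueness_set :: "nat \<Rightarrow> nat \<Rightarrow> (nat \<Rightarrow> real) set \<Rightarrow> bool" where
  "uniqueness_set k q U \<longleftrightarrow> U \<subseteq> cube k \<and>
     (\<forall>\<phi>\<in>Bkq_plus k q. (\<forall>x\<in>U. \<phi> x = 0) \<longrightarrow> (\<forall>x\<in>cube k. \<phi> x = 0))"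

end

theory Submission imports Defs "HOL-Computational_Algebra.Polynomial" begin

lemma cube_0: "cube 0 = {\<lambda>_. 0}"
  by (auto simp: cube_def)

lemma cube_Suc: "cube (Suc k) = (\<lambda>(x,s). x(Suc k := s)) ` (cube k \<times> {-1,1})"
proof (rule set_eqI, rule iffI)
  fix y assume y: "y \<in> cube (Suc k)"
  let ?x = "y(Suc k := 0)"
  have "?x \<in> cube k" using y by (auto simp: cube_def)
  moreover have "y (Suc k) \<in> {-1,1}" using y by (auto simp: cube_def)
  ultimately have mem: "(?x, y (Suc k)) \<in> cube k \<times> {-1,1}" by simp
  show "y \<in> (\<lambda>(x,s). x(Suc k := s)) ` (cube k \<times> {-1,1})"
    by (rule image_eqI[OF _ mem]) simp
next
  fix y assume "y \<in> (\<lambda>(x,s). x(Suc k := s)) ` (cube k \<times> {-1,1})"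
  then obtain p where p: "p \<in> cube k \<times> {-1,1}" and yp: "y = (\<lambda>(x,s). x(Suc k := s)) p"
    by (rule imageE)
  obtain x s where ps: "p = (x,s)" by (cases p)
  have x: "x \<in> cube k" and s: "s = -1 \<or> s = 1" using p ps by auto
  have yx: "y = x(Suc k := s)" using yp ps by simp
  have a: "y j = -1 \<or> y j = 1" if "j \<in> {1..Suc k}" for j
  proof (cases "j = Suc k")
    case True then show ?thesis using s yx by simp
  next
    case False
    then have "j \<in> {1..k}" using that by auto
    then show ?thesis using x False yx unfolding cube_def by simp
  qed
  have b: "y j = 0" if "j \<notin> {1..Suc k}" for j
  proof -
    have "j \<noteq> Suc k" "j \<notin> {1..k}" using that by auto
    then show ?thesis using x yx unfolding cube_def by simp
  qed
  show "y \<in> cube (Suc k)" unfolding cube_def using a b by blast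
qed

lemma cube_inj: "inj_on (\<lambda>(x,s). x(Suc k := s)) (cube k \<times> {-1,1})"
proof (rule inj_onI, clarify)
  fix x s x' s' assume a: "x \<in> cube k" "x' \<in> cube k" "x(Suc k := s) = x'(Suc k := s')"
  have "s = s'" using fun_cong[OF a(3), of "Suc k"] by simp
  moreover have "x = x'"
  proof
    fix j show "x j = x' j"
    proof (cases "j = Suc k")
      case True then show ?thesis using a(1,2) by (auto simp: cube_def)
    next
      case False then show ?thesis using fun_cong[OF a(3), of j] by simp
    qed
  qed
  ultimately show "x = x' \<and> s = s'" by simp
qed

lemma finite_cube: "finite (cube k)"
  by (induction k) (auto simp: cube_0 cube_Suc)

lemma sum_cube_Suc: "(\<Sum>y\<in>cube (Suc k). f y) = (\<Sum>x\<in>cube k. f (x(Suc k := 1)) + f (x(Suc k := -1)))"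
proof -
  have "(\<Sum>y\<in>cube (Suc k). f y) = (\<Sum>p\<in>cube k \<times> {-1,1}. f ((\<lambda>(x,s). x(Suc k := s)) p))"
    unfolding cube_Suc by (rule sum.reindex[OF cube_inj, unfolded comp_def])
  also have "\<dots> = (\<Sum>(x,s)\<in>cube k \<times> {-1,1::real}. f (x(Suc k := s)))"
    by (rule sum.cong) auto
  also have "\<dots> = (\<Sum>x\<in>cube k. \<Sum>s\<in>{-1,1::real}. f (x(Suc k := s)))"
    by (rule sum.cartesian_product[symmetric])
  also have "\<dots> = (\<Sum>x\<in>cube k. f (x(Suc k := 1)) + f (x(Suc k := -1)))"
    by (simp add: add.commute)
  finally show ?thesis .
qed

definition gt :: "real \<Rightarrow> nat \<Rightarrow> (nat \<Rightarrow> real) \<Rightarrow> real" where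
  "gt t k x = (\<Prod>j\<in>{1..k}. 1 + t * x j)"

lemma key: "L \<subseteq> {1..k} \<Longrightarrow> (\<Sum>x\<in>cube k. gt t k x * walsh L x) = 2^k * t ^ card L"
proof (induction k arbitrary: L)
  case 0
  then show ?case by (simp add: cube_0 gt_def walsh_def)
next
  case (Suc k)
  have g: "gt t (Suc k) (x(Suc k := s)) = gt t k x * (1 + t * s)" for x s
  proof -
    have "gt t (Suc k) (x(Suc k := s)) = (\<Prod>j\<in>{1..k}. 1 + t * (x(Suc k := s)) j) * (1 + t * s)"
      unfolding gt_def by (simp add: atLeastAtMostSuc_conv)
    also have "(\<Prod>j\<in>{1..k}. 1 + t * (x(Suc k := s)) j) = gt t k x"
      unfolding gt_def by (rule prod.cong) auto
    finally show ?thesis .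
  qed
  show ?case
  proof (cases "Suc k \<in> L")
    case True
    let ?L = "L - {Suc k}"
    have L': "?L \<subseteq> {1..k}" using Suc.prems by auto
    have w: "walsh L (x(Suc k := s)) = walsh ?L x * s" for x s
    proof -
      have "walsh L (x(Suc k := s)) = (\<Prod>j\<in>insert (Suc k) ?L. (x(Suc k := s)) j)"
        unfolding walsh_def using True by (simp add: insert_absorb)
      also have "\<dots> = s * (\<Prod>j\<in>?L. (x(Suc k := s)) j)"
        using Suc.prems by (subst prod.insert) (auto intro: finite_subset)
      also have "(\<Prod>j\<in>?L. (x(Suc k := s)) j) = walsh ?L x"
        unfolding walsh_def by (rule prod.cong) auto
      finally show ?thesis by (metis mult.commute)
    qed
    have cL: "card L = Suc (card ?L)"
      using True Suc.prems by (metis card_Suc_Diff1 finite_atLeastAtMost finite_subset)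
    have "(\<Sum>x\<in>cube (Suc k). gt t (Suc k) x * walsh L x)
        = (\<Sum>x\<in>cube k. gt t k x * walsh ?L x * (2 * t))"
      unfolding sum_cube_Suc g w by (rule sum.cong) (auto simp: algebra_simps)
    also have "\<dots> = 2^k * t ^ card ?L * (2 * t)"
      by (simp add: sum_distrib_right[symmetric] Suc.IH[OF L'])
    finally show ?thesis using cL by simp
  next
    case False
    have L': "L \<subseteq> {1..k}" using Suc.prems False by (auto simp: le_Suc_eq)
    have w: "walsh L (x(Suc k := s)) = walsh L x" for x s
      unfolding walsh_def using False by (intro prod.cong) auto
    have "(\<Sum>x\<in>cube (Suc k). gt t (Suc k) x * walsh L x)
        = (\<Sum>x\<in>cube k. gt t k x * walsh L x * 2)"
      unfolding sum_cube_Suc g w by (rule sum.cong) (auto simp: algebra_simps)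
    also have "\<dots> = 2^k * t ^ card L * 2"
      by (simp add: sum_distrib_right[symmetric] Suc.IH[OF L'])
    finally show ?thesis by simp
  qed
qed


definition nm :: "nat \<Rightarrow> (nat \<Rightarrow> real) \<Rightarrow> nat" where
  "nm k x = card {j\<in>{1..k}. x j = -1}"

lemma card_plus: "x \<in> cube k \<Longrightarrow> card {j\<in>{1..k}. x j = 1} = k - nm k x"
proof -
  assume x: "x \<in> cube k"
  have e: "{j\<in>{1..k}. x j = 1} = {1..k} - {j\<in>{1..k}. x j = -1}"
    using x by (auto simp: cube_def)
  show ?thesis unfolding e nm_def by (subst card_Diff_subset) auto
qed

lemma gt_layer: "x \<in> cube k \<Longrightarrow> gt t k x = (1+t)^(k - nm k x) * (1-t)^(nm k x)"
proof -
  assume x: "x \<in> cube k"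
  let ?A = "{j\<in>{1..k}. x j = -1}" and ?B = "{j\<in>{1..k}. x j = 1}"
  have u: "{1..k} = ?B \<union> ?A" using x by (auto simp: cube_def)
  have "(\<Prod>j\<in>?B \<union> ?A. 1 + t * x j) = (\<Prod>j\<in>?B. 1 + t * x j) * (\<Prod>j\<in>?A. 1 + t * x j)"
    by (rule prod.union_disjoint) auto
  then have "gt t k x = (\<Prod>j\<in>?B. 1 + t * x j) * (\<Prod>j\<in>?A. 1 + t * x j)"
    unfolding gt_def by (simp only: u[symmetric])
  also have "(\<Prod>j\<in>?B. 1 + t * x j) = (\<Prod>j\<in>?B. 1 + t)" by (rule prod.cong) auto
  also have "(\<Prod>j\<in>?A. 1 + t * x j) = (\<Prod>j\<in>?A. 1 - t)" by (rule prod.cong) auto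
  finally have "gt t k x = (\<Prod>j\<in>?B. 1 + t) * (\<Prod>j\<in>?A. 1 - t)" .
  also have "\<dots> = (1+t)^card ?B * (1-t)^card ?A" by (simp only: prod_constant)
  also have "card ?A = nm k x" unfolding nm_def ..
  also have "card ?B = k - nm k x" by (rule card_plus[OF x])
  finally show ?thesis .
qed

lemma sum_phi:
  assumes "\<forall>x\<in>cube k. \<phi> x = (\<Sum>L\<in>Ls. c L * walsh L x)" "\<forall>L\<in>Ls. L \<subseteq> {1..k}"
  shows "(\<Sum>x\<in>cube k. \<phi> x * gt t k x) = (\<Sum>L\<in>Ls. c L * 2^k * t ^ card L)"
proof -
  have "(\<Sum>x\<in>cube k. \<phi> x * gt t k x) = (\<Sum>x\<in>cube k. \<Sum>L\<in>Ls. c L * (gt t k x * walsh L x))"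
    using assms(1) by (intro sum.cong) (auto simp: sum_distrib_left ac_simps)
  also have "\<dots> = (\<Sum>L\<in>Ls. c L * (\<Sum>x\<in>cube k. gt t k x * walsh L x))"
    by (subst sum.swap) (simp add: sum_distrib_left)
  also have "\<dots> = (\<Sum>L\<in>Ls. c L * 2^k * t ^ card L)"
    using assms(2) by (intro sum.cong) (auto simp: key)
  finally show ?thesis .
qed

lemma aux: "((a::real)*b)^n * (p * (a^m * b^l)) = p * (a^(n+m) * b^(n+l))"
  unfolding power_add power_mult_distrib by (simp only: mult_ac)

lemma main:
  assumes phi: "\<phi> \<in> Bkq k q" and qr: "q \<le> 2*r+1"
    and van: "\<forall>x\<in>cube k. (nm k x \<le> r \<or> k - r \<le> nm k x) \<longrightarrow> \<phi> x = 0"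
  shows "(\<Sum>x\<in>cube k. \<phi> x) = 0"
proof -
  define Ls where "Ls = {L. L \<subseteq> {1..k} \<and> card L \<le> q}"
  obtain c where c: "\<forall>x\<in>cube k. \<phi> x = (\<Sum>L\<in>Ls. c L * walsh L x)"
    using phi unfolding Bkq_def Ls_def by blast
  have finLs: "finite Ls" unfolding Ls_def
    by (rule finite_subset[of _ "Pow {1..k}"]) auto
  define PP where "PP = (\<Sum>L\<in>Ls. monom (c L * 2^k) (card L))"
  have degPP: "degree PP \<le> q" unfolding PP_def
    by (rule degree_sum_le[OF finLs]) (auto simp: Ls_def intro: order.trans[OF degree_monom_le])
  define M where "M = {x\<in>cube k. r < nm k x \<and> nm k x < k - r}"
  define S where "S = (\<Sum>x\<in>M. smult (\<phi> x) ([:1,1:]^(k - nm k x - Suc r) * [:1,-1:]^(nm k x - Suc r)))"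
  define D where "D = [:1,1:] * [:1,-1::real:]"
  define RR where "RR = D^(Suc r) * S"
  have finM: "finite M" unfolding M_def using finite_cube by auto
  have "poly RR t = poly PP t" for t
  proof -
    have "poly RR t = (\<Sum>x\<in>M. \<phi> x * gt t k x)"
      unfolding RR_def S_def poly_mult poly_sum sum_distrib_left poly_power
    proof (rule sum.cong[OF refl])
      fix x assume xM: "x \<in> M"
      then have x: "x \<in> cube k" and n1: "Suc r \<le> nm k x" and n2: "Suc r \<le> k - nm k x"
        unfolding M_def by auto
      have e1: "k - nm k x = Suc r + (k - nm k x - Suc r)" using n2 by simp
      have e2: "nm k x = Suc r + (nm k x - Suc r)" using n1 by simp
      have gte: "gt t k x = (1+t)^(Suc r + (k - nm k x - Suc r)) * (1-t)^(Suc r + (nm k x - Suc r))"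
        unfolding e1[symmetric] e2[symmetric] by (rule gt_layer[OF x])
      show "poly D t ^ Suc r * poly (smult (\<phi> x) ([:1,1:]^(k - nm k x - Suc r) * [:1,-1:]^(nm k x - Suc r))) t
          = \<phi> x * gt t k x"
      proof -
        have p1: "poly [:1,1:] t = 1+t" and p2: "poly [:1,-1:] t = 1-t" by simp_all
        show ?thesis unfolding D_def poly_smult poly_mult poly_power p1 p2 gte
          by (rule aux)
      qed
    qed
    also have "\<dots> = (\<Sum>x\<in>cube k. \<phi> x * gt t k x)"
      by (rule sum.mono_neutral_left) (use finite_cube van in \<open>auto simp: M_def\<close>)
    also have "\<dots> = poly PP t"
      unfolding PP_def poly_sum poly_monom
      by (rule sum_phi[OF c]) (auto simp: Ls_def)
    finally show ?thesis .
  qed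
  then have RP: "RR = PP" using poly_eq_poly_eq_iff by blast
  have S0: "S = 0"
  proof (rule ccontr)
    assume "S \<noteq> 0"
    have D0: "D \<noteq> 0" and dD: "degree D = 2" unfolding D_def
      by (simp_all add: degree_mult_eq)
    have "degree RR = Suc r * 2 + degree S"
      unfolding RR_def using D0 dD \<open>S \<noteq> 0\<close>
      by (simp add: degree_mult_eq degree_power_eq)
    then show False using RP degPP qr by simp
  qed
  have "(\<Sum>x\<in>cube k. \<phi> x) = (\<Sum>x\<in>cube k. \<phi> x * gt 0 k x)"
    by (simp add: gt_def)
  also have "\<dots> = poly PP 0"
    unfolding PP_def poly_sum poly_monom
    by (rule sum_phi[OF c]) (auto simp: Ls_def)
  also have "\<dots> = 0" using RP S0 unfolding RR_def by simp
  finally show ?thesis .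
qed


lemma small_sets: "1 \<le> k \<Longrightarrow> card {S. S \<subseteq> {1..k} \<and> card S \<le> r} \<le> (r+1) * k^r"
proof -
  assume k: "1 \<le> k"
  have "{S. S \<subseteq> {1..k} \<and> card S \<le> r} = (\<Union>i\<in>{..r}. {S. S \<subseteq> {1..k} \<and> card S = i})" by auto
  then have "card {S. S \<subseteq> {1..k} \<and> card S \<le> r} \<le> (\<Sum>i\<in>{..r}. card {S. S \<subseteq> {1..k} \<and> card S = i})"
  proof -
    have "card (\<Union>i\<in>{..r}. {S. S \<subseteq> {1..k} \<and> card S = i}) \<le> (\<Sum>i\<in>{..r}. card {S. S \<subseteq> {1..k} \<and> card S = i})"
      by (rule card_UN_le) simp
    then show ?thesis using \<open>{S. S \<subseteq> {1..k} \<and> card S \<le> r} = _\<close> by simp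
  qed
  also have "\<dots> = (\<Sum>i\<in>{..r}. k choose i)" by (simp add: n_subsets)
  also have "\<dots> \<le> (\<Sum>i\<in>{..r}. k ^ r)"
  proof (rule sum_mono)
    fix i assume "i \<in> {..r}"
    then have "k ^ i \<le> k ^ r" using k by (simp add: power_increasing)
    moreover have "k choose i \<le> k ^ i"
      by (cases "i \<le> k") (auto simp: binomial_le_pow binomial_eq_0 not_le)
    ultimately show "k choose i \<le> k ^ r" by linarith
  qed
  finally show ?thesis by simp
qed

lemma cube_set_inj:
  assumes "x \<in> cube k" "y \<in> cube k" "{j\<in>{1..k}. x j = v} = {j\<in>{1..k}. y j = v}" "v = 1 \<or> v = -1"
  shows "x = y"
proof
  fix j show "x j = y j"
  proof (cases "j \<in> {1..k}")
    case True
    then have "x j = v \<longleftrightarrow> y j = v" using assms(3) by blast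
    moreover have "x j = -1 \<or> x j = 1" "y j = -1 \<or> y j = 1"
      using assms(1,2) True unfolding cube_def by auto
    ultimately show ?thesis using assms(4) by auto
  next
    case False then show ?thesis using assms(1,2) unfolding cube_def by auto
  qed
qed

theorem theorem3:
  fixes q :: nat
  assumes "q \<ge> 1"
  shows "\<exists>C :: real. \<forall>k \<ge> q. \<exists>U. uniqueness_set k q U \<and>
           real (card U) \<le> C * real k ^ (q div 2)"
proof (intro exI allI impI)
  fix k assume kq: "q \<le> k"
  define r where "r = q div 2"
  have qr: "q \<le> 2*r+1" unfolding r_def by simp
  define U1 where "U1 = {x\<in>cube k. nm k x \<le> r}"
  define U2 where "U2 = {x\<in>cube k. k - r \<le> nm k x}"
  define U where "U = U1 \<union> U2"
  define Ss where "Ss = {S. S \<subseteq> {1..k} \<and> card S \<le> r}"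
  have finSs: "finite Ss" unfolding Ss_def by (rule finite_subset[of _ "Pow {1..k}"]) auto
  have c1: "card U1 \<le> card Ss"
  proof (rule card_inj_on_le[of "\<lambda>x. {j\<in>{1..k}. x j = -1}"])
    show "inj_on (\<lambda>x. {j\<in>{1..k}. x j = -1}) U1"
      by (rule inj_onI) (rule cube_set_inj, auto simp: U1_def)
    show "(\<lambda>x. {j\<in>{1..k}. x j = -1}) ` U1 \<subseteq> Ss"
      by (auto simp: U1_def Ss_def nm_def)
  qed (rule finSs)
  have c2: "card U2 \<le> card Ss"
  proof (rule card_inj_on_le[of "\<lambda>x. {j\<in>{1..k}. x j = 1}"])
    show "inj_on (\<lambda>x. {j\<in>{1..k}. x j = 1}) U2"
      by (rule inj_onI) (rule cube_set_inj, auto simp: U2_def)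
    show "(\<lambda>x. {j\<in>{1..k}. x j = 1}) ` U2 \<subseteq> Ss"
      using card_plus by (fastforce simp: U2_def Ss_def)
  qed (rule finSs)
  have cS: "card Ss \<le> (r+1) * k^r" unfolding Ss_def using small_sets kq assms by simp
  have "card U \<le> card U1 + card U2" unfolding U_def by (rule card_Un_le)
  also have "\<dots> \<le> 2 * ((r+1) * k^r)" using c1 c2 cS by linarith
  finally have "real (card U) \<le> real (2 * ((r+1) * k^r))" by (simp only: of_nat_le_iff)
  moreover have "real (2 * ((r+1) * k^r)) = real (2 * (q div 2 + 1)) * real k ^ (q div 2)"
    unfolding r_def by (simp only: of_nat_mult of_nat_power)
  ultimately have ineq: "real (card U) \<le> real (2 * (q div 2 + 1)) * real k ^ (q div 2)"
    by linarith
  have uq: "uniqueness_set k q U"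
    unfolding uniqueness_set_def
  proof (intro conjI ballI impI)
    show "U \<subseteq> cube k" unfolding U_def U1_def U2_def by auto
    fix \<phi> assume phi: "\<phi> \<in> Bkq_plus k q" and z: "\<forall>x\<in>U. \<phi> x = 0"
    have s: "(\<Sum>x\<in>cube k. \<phi> x) = 0"
      using phi z by (intro main[OF _ qr]) (auto simp: Bkq_plus_def U_def U1_def U2_def)
    have nn: "\<forall>x\<in>cube k. \<phi> x \<ge> 0" using phi by (simp add: Bkq_plus_def)
    fix x assume "x \<in> cube k"
    then show "\<phi> x = 0" using s nn sum_nonneg_eq_0_iff[OF finite_cube] by blast
  qed
  show "uniqueness_set k q U \<and> real (card U) \<le> real (2 * (q div 2 + 1)) * real k ^ (q div 2)"
    by (rule conjI[OF uq ineq])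
qed

end
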